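(* Let $\pi>0$, let $0<\theta_1<\dots<\theta_K$ and $0\le\beta_1<\dots<\beta_M\le1$, and let $A:[0,D]\to[0,\infty)$ be differentiable with $A'(Q)<0$ on $[0,D]$. For $Q\in[0,D]$ define $\sigma(Q,\beta,\theta)=-[\theta\beta+\pi(1-\beta)]A'(Q)$. Let $\Lambda_1$ denote a user type $(\beta_m,\theta_k)$ with the smallest value of $\sigma(Q,\cdot)$ and $\Lambda_{KM}$ a user type with the largest value of $\sigma(Q,\cdot)$ among the $KM$ types. Then: (i) if $\theta_1<\theta_K<\pi$, one may take $\Lambda_1=(\beta_M,\theta_1)$ and $\Lambda_{KM}=(\beta_1,\theta_K)$; (ii) if $\theta_1<\pi<\theta_K$, one may take $\Lambda_1=(\beta_M,\theta_1)$ and $\Lambda_{KM}=(\beta_M,\theta_K)$; (iii) if $\pi<\theta_1<\theta_K$, one may take $\Lambda_1=(\beta_1,\theta_1)$ and $\Lambda_{KM}=(\beta_M,\theta_K)$. (That is, in each case the stated type minimizes, resp. maximizes, $\sigma(Q,\cdot)$ over all $KM$ types, for every $Q$.)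
   Context: Model: $\pi$ is the overage price per unit of data beyond the cap; $A(Q)$ is a subscriber's expected overage consumption under data cap $Q$ (decreasing and convex). A user type $(\beta,\theta)$ consists of a data valuation $\theta$ and a network substitutability $\beta$; $\sigma$ is the user's willingness-to-pay (slope of his indifference curve in the cap/fee plane). Types are sorted as $\Lambda_1,\dots,\Lambda_{KM}$ in ascending order of $\sigma$; this ordering does not depend on $Q$. *)

theory Defs
  imports Complex_Main
begin

definition wtp :: "real \<Rightarrow> (real \<Rightarrow> real) \<Rightarrow> real \<Rightarrow> real \<Rightarrow> real \<Rightarrow> real" where
  "wtp pr A' Q b t = - (t * b + pr * (1 - b)) * A' Q"

end

theory Submission
  imports Defs
begin

lemma wtp_alt: "wtp pr A' Q b t = (pr + b * (t - pr)) * (- A' Q)"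
  unfolding wtp_def by (simp add: algebra_simps)

lemma cmp: "c > 0 \<Longrightarrow> b1 * (t1 - pr) \<le> b2 * (t2 - pr) \<Longrightarrow>
   wtp pr A' Q b1 t1 \<le> wtp pr A' Q b2 t2" if "c = - A' Q" for c
  using that unfolding wtp_alt by (intro mult_right_mono) auto

theorem proposition2:
  fixes pr D :: real and K M :: nat
    and theta beta :: "nat \<Rightarrow> real"
    and A A' :: "real \<Rightarrow> real"
  assumes pr_pos: "pr > 0"
    and K_pos: "K \<ge> 1" and M_pos: "M \<ge> 1"
    and theta_pos: "theta 1 > 0"
    and theta_mono: "\<And>i j. 1 \<le> i \<Longrightarrow> i < j \<Longrightarrow> j \<le> K \<Longrightarrow> theta i < theta j"
    and beta_nonneg: "beta 1 \<ge> 0" and beta_le1: "beta M \<le> 1"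
    and beta_mono: "\<And>i j. 1 \<le> i \<Longrightarrow> i < j \<Longrightarrow> j \<le> M \<Longrightarrow> beta i < beta j"
    and D_nonneg: "D \<ge> 0"
    and A_nonneg: "\<And>Q. Q \<in> {0..D} \<Longrightarrow> A Q \<ge> 0"
    and A_deriv: "\<And>Q. Q \<in> {0..D} \<Longrightarrow> (A has_real_derivative A' Q) (at Q within {0..D})"
    and A'_neg: "\<And>Q. Q \<in> {0..D} \<Longrightarrow> A' Q < 0"
  shows
    "(theta 1 < theta K \<and> theta K < pr \<longrightarrow>
       (\<forall>Q\<in>{0..D}. \<forall>m\<in>{1..M}. \<forall>k\<in>{1..K}.
          wtp pr A' Q (beta M) (theta 1) \<le> wtp pr A' Q (beta m) (theta k) \<and>
          wtp pr A' Q (beta m) (theta k) \<le> wtp pr A' Q (beta 1) (theta K))) \<and>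
     (theta 1 < pr \<and> pr < theta K \<longrightarrow>
       (\<forall>Q\<in>{0..D}. \<forall>m\<in>{1..M}. \<forall>k\<in>{1..K}.
          wtp pr A' Q (beta M) (theta 1) \<le> wtp pr A' Q (beta m) (theta k) \<and>
          wtp pr A' Q (beta m) (theta k) \<le> wtp pr A' Q (beta M) (theta K))) \<and>
     (pr < theta 1 \<and> theta 1 < theta K \<longrightarrow>
       (\<forall>Q\<in>{0..D}. \<forall>m\<in>{1..M}. \<forall>k\<in>{1..K}.
          wtp pr A' Q (beta 1) (theta 1) \<le> wtp pr A' Q (beta m) (theta k) \<and>
          wtp pr A' Q (beta m) (theta k) \<le> wtp pr A' Q (beta M) (theta K)))"
proof -
  have th: "theta 1 \<le> theta k \<and> theta k \<le> theta K" if "k \<in> {1..K}" for k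
    using that theta_mono[of 1 k] theta_mono[of k K] by (cases "k = 1"; cases "k = K") auto
  have be: "beta 1 \<le> beta m \<and> beta m \<le> beta M" if "m \<in> {1..M}" for m
    using that beta_mono[of 1 m] beta_mono[of m M] by (cases "m = 1"; cases "m = M") auto
  have key: "wtp pr A' Q b1 t1 \<le> wtp pr A' Q b2 t2"
    if "Q \<in> {0..D}" "b1 * (t1 - pr) \<le> b2 * (t2 - pr)" for Q b1 t1 b2 t2
    using cmp[OF refl] A'_neg[OF that(1)] that(2) by auto
  show ?thesis
  proof (intro conjI impI ballI)
    fix Q m k assume C: "theta 1 < theta K \<and> theta K < pr" and Q: "Q \<in> {0..D}" and m: "m \<in> {1..M}" and k: "k \<in> {1..K}"
    note t = th[OF k] and b = be[OF m]
    show "wtp pr A' Q (beta M) (theta 1) \<le> wtp pr A' Q (beta m) (theta k)"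
      apply (rule key[OF Q]) using C t b beta_nonneg
      by (smt (verit) mult_left_mono mult_right_mono_neg)
    show "wtp pr A' Q (beta m) (theta k) \<le> wtp pr A' Q (beta 1) (theta K)"
      apply (rule key[OF Q]) using C t b beta_nonneg
      by (smt (verit) mult_left_mono mult_right_mono_neg)
  next
    fix Q m k assume C: "theta 1 < pr \<and> pr < theta K" and Q: "Q \<in> {0..D}" and m: "m \<in> {1..M}" and k: "k \<in> {1..K}"
    note t = th[OF k] and b = be[OF m]
    show "wtp pr A' Q (beta M) (theta 1) \<le> wtp pr A' Q (beta m) (theta k)"
      apply (rule key[OF Q]) using C t b beta_nonneg
      by (smt (verit) mult_left_mono mult_right_mono_neg)
    show "wtp pr A' Q (beta m) (theta k) \<le> wtp pr A' Q (beta M) (theta K)"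
      apply (rule key[OF Q]) using C t b beta_nonneg
      by (smt (verit) mult_left_mono mult_right_mono)
  next
    fix Q m k assume C: "pr < theta 1 \<and> theta 1 < theta K" and Q: "Q \<in> {0..D}" and m: "m \<in> {1..M}" and k: "k \<in> {1..K}"
    note t = th[OF k] and b = be[OF m]
    show "wtp pr A' Q (beta 1) (theta 1) \<le> wtp pr A' Q (beta m) (theta k)"
      apply (rule key[OF Q]) using C t b beta_nonneg
      by (smt (verit) mult_left_mono mult_right_mono)
    show "wtp pr A' Q (beta m) (theta k) \<le> wtp pr A' Q (beta M) (theta K)"
      apply (rule key[OF Q]) using C t b beta_nonneg
      by (smt (verit) mult_left_mono mult_right_mono)
  qed
qed

end
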